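(* Let $P,Q$ be join-semilattices with a least element. Then: (1) $Q$ is embeddable in $P$ by a join-preserving map (an injective $f$ with $f(x\vee y)=f(x)\vee f(y)$) if and only if $Q$ is embeddable in $P$ by a map preserving finite joins. (2) If $Q$ is embeddable in $P$ by a join-preserving map, then $J(Q)$ is embeddable in $J(P)$ by a map preserving arbitrary joins. Suppose moreover $Q=I_{<\omega}(R)$ for some poset $R$. Then: (3) $Q$ is embeddable in $P$ as a poset if and only if $Q$ is embeddable in $P$ by a map preserving finite joins. (4) $J(Q)$ is embeddable in $J(P)$ as a poset if and only if $J(Q)$ is embeddable in $J(P)$ by a map preserving arbitrary joins. (5) If $\downarrow x$ is finite for every $x\in R$, then $Q$ is embeddable in $P$ as a poset if and only if $J(Q)$ is embeddable in $J(P)$ as a poset.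
   Context: A map preserves finite (resp. arbitrary) joins if $f(\bigvee X)=\bigvee\{f(x):x\in X\}$ for every finite (resp. arbitrary) subset $X$. An ideal is a non-empty up-directed initial segment; $J(\cdot)$ denotes the set of ideals ordered by inclusion. For a poset $R$, $I_{<\omega}(R)$ is the set of finitely generated initial segments $\downarrow A$ ($A\subseteq R$ finite) ordered by inclusion, a join-semilattice with join $=$ union and least element $\emptyset$; $\downarrow x=\{y\in R: y\le x\}$. Embedding as a poset means order-embedding. *)

theory Defs
  imports Main
begin

definition poset_on :: "'a set \<Rightarrow> ('a \<Rightarrow> 'a \<Rightarrow> bool) \<Rightarrow> bool" where
  "poset_on A le \<longleftrightarrow>
     (\<forall>x\<in>A. le x x) \<and>
     (\<forall>x\<in>A. \<forall>y\<in>A. le x y \<and> le y x \<longrightarrow> x = y) \<and>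
     (\<forall>x\<in>A. \<forall>y\<in>A. \<forall>z\<in>A. le x y \<and> le y z \<longrightarrow> le x z)"

definition lub_in :: "'a set \<Rightarrow> ('a \<Rightarrow> 'a \<Rightarrow> bool) \<Rightarrow> 'a set \<Rightarrow> 'a \<Rightarrow> bool" where
  "lub_in A le X s \<longleftrightarrow>
     s \<in> A \<and> (\<forall>x\<in>X. le x s) \<and> (\<forall>u\<in>A. (\<forall>x\<in>X. le x u) \<longrightarrow> le s u)"

definition join_semilattice_bot :: "'a set \<Rightarrow> ('a \<Rightarrow> 'a \<Rightarrow> bool) \<Rightarrow> bool" where
  "join_semilattice_bot A le \<longleftrightarrow>
     poset_on A le \<and>
     (\<forall>x\<in>A. \<forall>y\<in>A. \<exists>s. lub_in A le {x, y} s) \<and>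
     (\<exists>b\<in>A. \<forall>x\<in>A. le b x)"

definition ideals :: "'a set \<Rightarrow> ('a \<Rightarrow> 'a \<Rightarrow> bool) \<Rightarrow> 'a set set" where
  "ideals A le = {I. I \<subseteq> A \<and> I \<noteq> {} \<and>
     (\<forall>x\<in>I. \<forall>y\<in>A. le y x \<longrightarrow> y \<in> I) \<and>
     (\<forall>x\<in>I. \<forall>y\<in>I. \<exists>z\<in>I. le x z \<and> le y z)}"

definition down_set :: "'a set \<Rightarrow> ('a \<Rightarrow> 'a \<Rightarrow> bool) \<Rightarrow> 'a set \<Rightarrow> 'a set" where
  "down_set R le X = {y\<in>R. \<exists>a\<in>X. le y a}"

definition fin_init_segs :: "'a set \<Rightarrow> ('a \<Rightarrow> 'a \<Rightarrow> bool) \<Rightarrow> 'a set set" where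
  "fin_init_segs R le = {down_set R le X | X. X \<subseteq> R \<and> finite X}"

definition order_embedding ::
  "'a set \<Rightarrow> ('a \<Rightarrow> 'a \<Rightarrow> bool) \<Rightarrow> 'b set \<Rightarrow> ('b \<Rightarrow> 'b \<Rightarrow> bool) \<Rightarrow> ('a \<Rightarrow> 'b) \<Rightarrow> bool" where
  "order_embedding A leA B leB f \<longleftrightarrow>
     f ` A \<subseteq> B \<and> (\<forall>x\<in>A. \<forall>y\<in>A. leA x y \<longleftrightarrow> leB (f x) (f y))"

definition join_embedding ::
  "'a set \<Rightarrow> ('a \<Rightarrow> 'a \<Rightarrow> bool) \<Rightarrow> 'b set \<Rightarrow> ('b \<Rightarrow> 'b \<Rightarrow> bool) \<Rightarrow> ('a \<Rightarrow> 'b) \<Rightarrow> bool" where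
  "join_embedding A leA B leB f \<longleftrightarrow>
     f ` A \<subseteq> B \<and> inj_on f A \<and>
     (\<forall>x\<in>A. \<forall>y\<in>A. \<forall>s. lub_in A leA {x, y} s \<longrightarrow> lub_in B leB {f x, f y} (f s))"

definition fin_join_embedding ::
  "'a set \<Rightarrow> ('a \<Rightarrow> 'a \<Rightarrow> bool) \<Rightarrow> 'b set \<Rightarrow> ('b \<Rightarrow> 'b \<Rightarrow> bool) \<Rightarrow> ('a \<Rightarrow> 'b) \<Rightarrow> bool" where
  "fin_join_embedding A leA B leB f \<longleftrightarrow>
     f ` A \<subseteq> B \<and> inj_on f A \<and>
     (\<forall>X. X \<subseteq> A \<and> finite X \<longrightarrow> (\<forall>s. lub_in A leA X s \<longrightarrow> lub_in B leB (f ` X) (f s)))"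

definition arb_join_embedding ::
  "'a set \<Rightarrow> ('a \<Rightarrow> 'a \<Rightarrow> bool) \<Rightarrow> 'b set \<Rightarrow> ('b \<Rightarrow> 'b \<Rightarrow> bool) \<Rightarrow> ('a \<Rightarrow> 'b) \<Rightarrow> bool" where
  "arb_join_embedding A leA B leB f \<longleftrightarrow>
     f ` A \<subseteq> B \<and> inj_on f A \<and>
     (\<forall>X. X \<subseteq> A \<longrightarrow> (\<forall>s. lub_in A leA X s \<longrightarrow> lub_in B leB (f ` X) (f s)))"

end

theory Submission
  imports Defs
begin


lemma poset_subset: "poset_on A (\<subseteq>)"
  unfolding poset_on_def by blast
lemma poset_refl: "poset_on A le \<Longrightarrow> x \<in> A \<Longrightarrow> le x x"
  unfolding poset_on_def by blast
lemma poset_antisym: "poset_on A le \<Longrightarrow> x \<in> A \<Longrightarrow> y \<in> A \<Longrightarrow> le x y \<Longrightarrow> le y x \<Longrightarrow> x = y"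
  unfolding poset_on_def by blast
lemma poset_trans: "poset_on A le \<Longrightarrow> x \<in> A \<Longrightarrow> y \<in> A \<Longrightarrow> z \<in> A \<Longrightarrow> le x y \<Longrightarrow> le y z \<Longrightarrow> le x z"
  unfolding poset_on_def by blast
lemma lub_inD: 
  "lub_in A le X s \<Longrightarrow> s \<in> A"
  "lub_in A le X s \<Longrightarrow> x \<in> X \<Longrightarrow> le x s"
  "lub_in A le X s \<Longrightarrow> u \<in> A \<Longrightarrow> (\<And>x. x \<in> X \<Longrightarrow> le x u) \<Longrightarrow> le s u"
  unfolding lub_in_def by blast+
lemma lub_inI:
  "s \<in> A \<Longrightarrow> (\<And>x. x \<in> X \<Longrightarrow> le x s) \<Longrightarrow> (\<And>u. u \<in> A \<Longrightarrow> (\<forall>x\<in>X. le x u) \<Longrightarrow> le s u) \<Longrightarrow> lub_in A le X s"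
  unfolding lub_in_def by blast

lemma lub_unique:
  assumes "poset_on A le" "lub_in A le X s" "lub_in A le X t" shows "s = t"
proof -
  have st: "s \<in> A" "t \<in> A" using lub_inD(1)[OF assms(2)] lub_inD(1)[OF assms(3)] by auto
  have "le s t" using lub_inD(3)[OF assms(2) st(2)] lub_inD(2)[OF assms(3)] by blast
  moreover have "le t s" using lub_inD(3)[OF assms(3) st(1)] lub_inD(2)[OF assms(2)] by blast
  ultimately show ?thesis using poset_antisym[OF assms(1) st] by auto
qed

lemma js_poset: "join_semilattice_bot A le \<Longrightarrow> poset_on A le"
  unfolding join_semilattice_bot_def by blast
lemma js_lub2: "join_semilattice_bot A le \<Longrightarrow> x\<in>A \<Longrightarrow> y\<in>A \<Longrightarrow> \<exists>s. lub_in A le {x,y} s"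
  unfolding join_semilattice_bot_def by blast
lemma lub_empty: "lub_in A le {} b \<longleftrightarrow> b\<in>A \<and> (\<forall>x\<in>A. le b x)"
  unfolding lub_in_def by blast
lemma js_bot: "join_semilattice_bot A le \<Longrightarrow> \<exists>b. lub_in A le {} b"
  unfolding join_semilattice_bot_def lub_empty by blast

lemma lub2_le: "poset_on A le \<Longrightarrow> x \<in> A \<Longrightarrow> y \<in> A \<Longrightarrow> le x y \<Longrightarrow> lub_in A le {x,y} y"
  by (rule lub_inI) (auto intro: poset_refl)

lemma lub_insert:
  assumes p: "poset_on A le" and XA: "X \<subseteq> A" and x: "x \<in> A" and t: "lub_in A le X t"
    and u: "lub_in A le {x,t} u"
  shows "lub_in A le (insert x X) u"
proof (rule lub_inI)
  have tA: "t \<in> A" using lub_inD(1)[OF t] .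
  show uA: "u \<in> A" using lub_inD(1)[OF u] .
  have tu: "le t u" "le x u" using lub_inD(2)[OF u] by auto
  fix y assume "y \<in> insert x X"
  then show "le y u"
  proof
    assume "y \<in> X"
    then have "le y t" "y \<in> A" using lub_inD(2)[OF t] XA by auto
    then show ?thesis using poset_trans[OF p _ tA uA] tu by blast
  qed (use tu in auto)
next
  fix v assume v: "v \<in> A" "\<forall>y\<in>insert x X. le y v"
  then have "le t v" using lub_inD(3)[OF t] by blast
  moreover have "le x v" using v by auto
  ultimately show "le u v" using lub_inD(3)[OF u v(1)] by blast
qed

lemma fin_lub_exists:
  assumes js: "join_semilattice_bot A le" and "finite X" "X \<subseteq> A" shows "\<exists>s. lub_in A le X s"
  using assms(2,3)
proof (induction X rule: finite_induct)
  case empty then show ?case using js_bot[OF js] by auto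
next
  case (insert x F)
  then have xA: "x \<in> A" and FA: "F \<subseteq> A" by auto
  with insert.IH obtain t where t: "lub_in A le F t" by auto
  then have tA: "t \<in> A" by (rule lub_inD(1))
  obtain u where u: "lub_in A le {x,t} u" using js_lub2[OF js xA tA] by (elim exE)
  show ?case using lub_insert[OF js_poset[OF js] FA xA t u] by (rule exI)
qed

lemma join_emb_order:
  assumes pA: "poset_on A leA" and pB: "poset_on B leB"
    and lA: "\<And>x y. x\<in>A \<Longrightarrow> y\<in>A \<Longrightarrow> \<exists>s. lub_in A leA {x,y} s"
    and f: "join_embedding A leA B leB f"
  shows "order_embedding A leA B leB f"
  unfolding order_embedding_def
proof (intro conjI ballI)
  show "f ` A \<subseteq> B" using f unfolding join_embedding_def by blast
  fix x y assume x: "x \<in> A" and y: "y \<in> A"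
  obtain s where s: "lub_in A leA {x,y} s" using lA x y by blast
  have fs: "lub_in B leB {f x, f y} (f s)" using f s x y unfolding join_embedding_def by blast
  have sA: "s \<in> A" using lub_inD(1)[OF s] .
  have fyB: "f y \<in> B" using f y unfolding join_embedding_def by blast
  have inj: "inj_on f A" using f unfolding join_embedding_def by blast
  show "leA x y \<longleftrightarrow> leB (f x) (f y)"
  proof
    assume "leA x y"
    then have "s = y" using lub_unique[OF pA s lub2_le[OF pA x y]] by blast
    then show "leB (f x) (f y)" using lub_inD(2)[OF fs] by auto
  next
    assume "leB (f x) (f y)"
    then have "f s = f y" using lub_unique[OF pB fs lub2_le[OF pB _ fyB]] f x
      unfolding join_embedding_def by blast
    then have "s = y" using inj sA y unfolding inj_on_def by blast
    then show "leA x y" using lub_inD(2)[OF s] by auto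
  qed
qed

lemma ord_emb_inj:
  assumes "poset_on A leA" "order_embedding A leA B leB f" shows "inj_on f A"
  unfolding inj_on_def
proof (intro ballI impI)
  fix x y assume xy: "x \<in> A" "y \<in> A" "f x = f y"
  have "leA x x" "leA y y" using poset_refl[OF assms(1)] xy by auto
  then have "leB (f x) (f x)" "leB (f y) (f y)" using assms(2) xy unfolding order_embedding_def by blast+
  then have "leA x y" "leA y x" using assms(2) xy unfolding order_embedding_def by auto
  then show "x = y" using poset_antisym[OF assms(1)] xy by blast
qed



lemma idealD:
  "I \<in> ideals A le \<Longrightarrow> I \<subseteq> A"
  "I \<in> ideals A le \<Longrightarrow> I \<noteq> {}"
  "I \<in> ideals A le \<Longrightarrow> x \<in> I \<Longrightarrow> y \<in> A \<Longrightarrow> le y x \<Longrightarrow> y \<in> I"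
  "I \<in> ideals A le \<Longrightarrow> x \<in> I \<Longrightarrow> y \<in> I \<Longrightarrow> \<exists>z\<in>I. le x z \<and> le y z"
  unfolding ideals_def by blast+

lemma idealI:
  "I \<subseteq> A \<Longrightarrow> I \<noteq> {} \<Longrightarrow> (\<And>x y. x \<in> I \<Longrightarrow> y \<in> A \<Longrightarrow> le y x \<Longrightarrow> y \<in> I)
   \<Longrightarrow> (\<And>x y. x \<in> I \<Longrightarrow> y \<in> I \<Longrightarrow> \<exists>z\<in>I. le x z \<and> le y z) \<Longrightarrow> I \<in> ideals A le"
  unfolding ideals_def by blast

lemma down_setD: "y \<in> down_set B le X \<Longrightarrow> y \<in> B \<and> (\<exists>a\<in>X. le y a)"
  unfolding down_set_def by blast
lemma down_setI: "y \<in> B \<Longrightarrow> a \<in> X \<Longrightarrow> le y a \<Longrightarrow> y \<in> down_set B le X"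
  unfolding down_set_def by blast

lemma ord_embD: "order_embedding A leA B leB f \<Longrightarrow> x \<in> A \<Longrightarrow> f x \<in> B"
  "order_embedding A leA B leB f \<Longrightarrow> x \<in> A \<Longrightarrow> y \<in> A \<Longrightarrow> leA x y \<longleftrightarrow> leB (f x) (f y)"
  unfolding order_embedding_def by blast+

lemma ideal_lift:
  assumes pA: "poset_on A leA" and pB: "poset_on B leB" and f: "order_embedding A leA B leB f"
  shows "order_embedding (ideals A leA) (\<subseteq>) (ideals B leB) (\<subseteq>) (\<lambda>I. down_set B leB (f`I))"
  unfolding order_embedding_def
proof (intro conjI ballI)
  note fA = ord_embD(1)[OF f] and fo = ord_embD(2)[OF f]
  show "(\<lambda>I. down_set B leB (f ` I)) ` ideals A leA \<subseteq> ideals B leB"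
  proof
    fix J assume "J \<in> (\<lambda>I. down_set B leB (f ` I)) ` ideals A leA"
    then obtain I where I: "I \<in> ideals A leA" and J: "J = down_set B leB (f ` I)" by blast
    note IA = idealD(1)[OF I]
    show "J \<in> ideals B leB"
    proof (rule idealI)
      show "J \<subseteq> B" unfolding J down_set_def by blast
      obtain x where x: "x \<in> I" using idealD(2)[OF I] by blast
      then have xA: "x \<in> A" using IA by blast
      have "f x \<in> J" unfolding J by (rule down_setI[where le=leB, OF fA[OF xA] imageI[where f=f, OF x] poset_refl[OF pB fA[OF xA]]])
      then show "J \<noteq> {}" by blast
    next
      fix x y assume x: "x \<in> J" and y: "y \<in> B" and yx: "leB y x"
      from down_setD[OF x[unfolded J]] obtain a where a: "a \<in> I" "leB x (f a)" "x \<in> B" by blast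
      have "f a \<in> B" using fA IA a(1) by blast
      then have "leB y (f a)" using poset_trans[OF pB y a(3) _ yx a(2)] by blast
      then show "y \<in> J" unfolding J using down_setI[where le=leB, OF y imageI[where f=f, OF a(1)]] by blast
    next
      fix x y assume x: "x \<in> J" and y: "y \<in> J"
      from down_setD[OF x[unfolded J]] obtain a where a: "a \<in> I" "leB x (f a)" "x \<in> B" by blast
      from down_setD[OF y[unfolded J]] obtain b where b: "b \<in> I" "leB y (f b)" "y \<in> B" by blast
      obtain c where c: "c \<in> I" "leA a c" "leA b c" using idealD(4)[OF I a(1) b(1)] by blast
      have abc: "a \<in> A" "b \<in> A" "c \<in> A" using IA a(1) b(1) c(1) by blast+
      have "leB (f a) (f c)" "leB (f b) (f c)" using c(2,3) fo abc by blast+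
      then have "leB x (f c)" "leB y (f c)"
        using poset_trans[OF pB a(3) fA[OF abc(1)] fA[OF abc(3)] a(2)]
          poset_trans[OF pB b(3) fA[OF abc(2)] fA[OF abc(3)] b(2)] by blast+
      moreover have "f c \<in> J" unfolding J
        by (rule down_setI[where le=leB, OF fA[OF abc(3)] imageI[where f=f, OF c(1)] poset_refl[OF pB fA[OF abc(3)]]])
      ultimately show "\<exists>z\<in>J. leB x z \<and> leB y z" by blast
    qed
  qed
  fix I J assume I: "I \<in> ideals A leA" and J: "J \<in> ideals A leA"
  show "I \<subseteq> J \<longleftrightarrow> down_set B leB (f ` I) \<subseteq> down_set B leB (f ` J)"
  proof
    assume IJ: "I \<subseteq> J" show "down_set B leB (f ` I) \<subseteq> down_set B leB (f ` J)"
    proof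
      fix y assume "y \<in> down_set B leB (f ` I)"
      then obtain a where "y \<in> B" "a \<in> f ` I" "leB y a" unfolding down_set_def by blast
      moreover then have "a \<in> f ` J" using IJ by blast
      ultimately show "y \<in> down_set B leB (f ` J)" unfolding down_set_def by blast
    qed
  next
    assume sub: "down_set B leB (f ` I) \<subseteq> down_set B leB (f ` J)"
    show "I \<subseteq> J"
    proof
      fix x assume x: "x \<in> I"
      have xA: "x \<in> A" using idealD(1)[OF I] x by blast
      have "f x \<in> down_set B leB (f ` I)"
        by (rule down_setI[where le=leB, OF fA[OF xA] imageI[where f=f, OF x] poset_refl[OF pB fA[OF xA]]])
      then have "f x \<in> down_set B leB (f ` J)" using sub by blast
      then obtain y where y: "y \<in> J" "leB (f x) (f y)" unfolding down_set_def by blast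
      have yA: "y \<in> A" using idealD(1)[OF J] y(1) by blast
      then have "leA x y" using fo[OF xA yA] y(2) by blast
      then show "x \<in> J" using idealD(3)[OF J y(1) xA] by blast
    qed
  qed
qed

lemma ideal_closed_lub2:
  assumes "U \<in> ideals A le" "x \<in> U" "y \<in> U" "lub_in A le {x,y} s"
  shows "s \<in> U"
proof -
  obtain z where z: "z \<in> U" "le x z" "le y z" using idealD(4)[OF assms(1-3)] by blast
  then have "z \<in> A" using idealD(1)[OF assms(1)] by blast
  then have "le s z" using lub_inD(3)[OF assms(4)] z by blast
  then show ?thesis using idealD(3)[OF assms(1) z(1) lub_inD(1)[OF assms(4)]] by blast
qed

lemma ideal_has_bot:
  assumes "U \<in> ideals A le" "lub_in A le {} b" shows "b \<in> U"
proof -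
  obtain x where x: "x \<in> U" using idealD(2)[OF assms(1)] by blast
  have "le b x" using lub_inD(3)[OF assms(2)] idealD(1)[OF assms(1)] x by blast
  then show ?thesis using idealD(3)[OF assms(1) x lub_inD(1)[OF assms(2)]] by blast
qed

definition SupJ :: "'a set \<Rightarrow> ('a \<Rightarrow> 'a \<Rightarrow> bool) \<Rightarrow> 'a set set \<Rightarrow> 'a set" where
  "SupJ A le F = \<Inter>{U \<in> ideals A le. \<Union>F \<subseteq> U}"

lemma whole_ideal: assumes js: "join_semilattice_bot A le" shows "A \<in> ideals A le"
proof (rule idealI)
  show "A \<subseteq> A" by (rule subset_refl)
  obtain b where "lub_in A le {} b" using js_bot[OF js] by (elim exE)
  then have "b \<in> A" by (rule lub_inD(1))
  then show "A \<noteq> {}" by (intro notI) simp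
next
  fix x y assume "x \<in> A" "y \<in> A" "le y x" then show "y \<in> A" by simp
next
  fix x y assume xy: "x \<in> A" "y \<in> A"
  obtain s where s: "lub_in A le {x,y} s" using js_lub2[OF js xy] by (elim exE)
  have "s \<in> A" "le x s" "le y s" using lub_inD(1)[OF s] lub_inD(2)[OF s] by auto
  then show "\<exists>z\<in>A. le x z \<and> le y z" by (intro bexI conjI)
qed

lemma SupJ_lub:
  assumes js: "join_semilattice_bot A le" and F: "F \<subseteq> ideals A le"
  shows "lub_in (ideals A le) (\<subseteq>) F (SupJ A le F)"
proof -
  obtain b where b: "lub_in A le {} b" using js_bot[OF js] by blast
  note Aid = whole_ideal[OF js]
  let ?S = "SupJ A le F"
  have UFA: "\<Union>F \<subseteq> A"
  proof
    fix x assume "x \<in> \<Union>F"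
    then obtain I where I: "I \<in> F" "x \<in> I" by (elim UnionE)
    have "I \<subseteq> A" using idealD(1) I(1) F by (auto simp only: subset_iff)
    then show "x \<in> A" using I(2) by (auto simp only: subset_iff)
  qed
  have "A \<in> {U \<in> ideals A le. \<Union>F \<subseteq> U}" using Aid UFA by simp
  then have SA: "?S \<subseteq> A" unfolding SupJ_def by (rule Inter_lower)
  have Sid: "?S \<in> ideals A le"
  proof (rule idealI)
    show "?S \<subseteq> A" by fact
    have "b \<in> ?S" unfolding SupJ_def using ideal_has_bot[OF _ b] by (auto simp only: mem_Collect_eq Inter_iff)
    then show "?S \<noteq> {}" by blast
  next
    fix x y assume xy: "x \<in> ?S" "y \<in> A" "le y x"
    show "y \<in> ?S" unfolding SupJ_def
    proof
      fix U assume U: "U \<in> {U \<in> ideals A le. \<Union> F \<subseteq> U}"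
      then have Ui: "U \<in> ideals A le" by simp
      have "x \<in> U" using xy(1) U unfolding SupJ_def by (rule InterD)
      then show "y \<in> U" using idealD(3)[OF Ui _ xy(2,3)] by simp
    qed
  next
    fix x y assume x: "x \<in> ?S" and y: "y \<in> ?S"
    have xyA: "x \<in> A" "y \<in> A" using x y SA by (auto simp only: subset_iff)
    obtain s where s: "lub_in A le {x,y} s" using js_lub2[OF js xyA] by (elim exE)
    have "s \<in> ?S" unfolding SupJ_def
    proof
      fix U assume U: "U \<in> {U \<in> ideals A le. \<Union> F \<subseteq> U}"
      then have Ui: "U \<in> ideals A le" by simp
      have "x \<in> U" "y \<in> U" using x y U unfolding SupJ_def by (auto dest: InterD)
      then show "s \<in> U" using ideal_closed_lub2[OF Ui _ _ s] by simp
    qed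
    then show "\<exists>z\<in>?S. le x z \<and> le y z" using lub_inD(2)[OF s] by blast
  qed
  show ?thesis
  proof (rule lub_inI)
    show "?S \<in> ideals A le" by fact
  next
    fix I assume "I \<in> F" then show "I \<subseteq> ?S" unfolding SupJ_def by blast
  next
    fix U assume "U \<in> ideals A le" "\<forall>I\<in>F. I \<subseteq> U"
    then show "?S \<subseteq> U" unfolding SupJ_def by blast
  qed
qed

lemma ideal_fin_lub:
  assumes p: "poset_on A le" and U: "U \<in> ideals A le" and S: "finite S" "S \<subseteq> U"
    and t: "lub_in A le S t"
  shows "t \<in> U"
proof -
  note UA = idealD(1)[OF U]
  have "\<exists>z\<in>U. \<forall>x\<in>S. le x z" using S
  proof (induction S rule: finite_induct)
    case empty then show ?case using idealD(2)[OF U] by blast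
  next
    case (insert x F)
    then have xU: "x \<in> U" and FU: "F \<subseteq> U" by auto
    from insert.IH[OF FU] obtain z where z: "z \<in> U" "\<forall>y\<in>F. le y z" by blast
    obtain w where w: "w \<in> U" "le x w" "le z w" using idealD(4)[OF U xU z(1)] by blast
    have "\<forall>y\<in>F. le y w"
    proof
      fix y assume y: "y \<in> F"
      then have "le y z" using z(2) by blast
      then show "le y w" using poset_trans[OF p _ _ _ _ w(3)] y FU UA z(1) w(1) by blast
    qed
    then show ?case using w by blast
  qed
  then obtain z where z: "z \<in> U" "\<forall>x\<in>S. le x z" by blast
  then have "z \<in> A" using UA by blast
  then have "le t z" using lub_inD(3)[OF t] z(2) by blast
  then show ?thesis using idealD(3)[OF U z(1) lub_inD(1)[OF t]] by blast
qed

lemma join_embD: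
  "join_embedding A leA B leB f \<Longrightarrow> x \<in> A \<Longrightarrow> f x \<in> B"
  "join_embedding A leA B leB f \<Longrightarrow> inj_on f A"
  "join_embedding A leA B leB f \<Longrightarrow> x \<in> A \<Longrightarrow> y \<in> A \<Longrightarrow> lub_in A leA {x,y} s \<Longrightarrow> lub_in B leB {f x, f y} (f s)"
  unfolding join_embedding_def by blast+

lemma bin_to_fin:
  assumes jA: "join_semilattice_bot A leA" and jB: "join_semilattice_bot B leB"
    and f: "join_embedding A leA B leB f"
    and bot: "\<And>b. lub_in A leA {} b \<Longrightarrow> lub_in B leB {} (f b)"
  shows "fin_join_embedding A leA B leB f"
  unfolding fin_join_embedding_def
proof (intro conjI allI impI)
  show "f ` A \<subseteq> B" using join_embD(1)[OF f] by blast
  show "inj_on f A" using join_embD(2)[OF f] .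
  have pA: "poset_on A leA" and pB: "poset_on B leB" using jA jB js_poset by auto
  note fA = join_embD(1)[OF f]
  have key: "finite X \<Longrightarrow> X \<subseteq> A \<Longrightarrow> \<exists>t. lub_in A leA X t \<and> lub_in B leB (f`X) (f t)" for X
  proof (induction X rule: finite_induct)
    case empty
    obtain b where "lub_in A leA {} b" using js_bot[OF jA] by blast
    then show ?case using bot by auto
  next
    case (insert x F)
    then have xA: "x \<in> A" and FA: "F \<subseteq> A" by auto
    from insert.IH[OF FA] obtain t where t: "lub_in A leA F t" "lub_in B leB (f`F) (f t)" by blast
    have tA: "t \<in> A" using lub_inD(1)[OF t(1)] .
    obtain u where u: "lub_in A leA {x,t} u" using js_lub2[OF jA xA tA] by blast
    have fu: "lub_in B leB {f x, f t} (f u)" using join_embD(3)[OF f xA tA u] .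
    have "lub_in A leA (insert x F) u" using lub_insert[OF pA FA xA t(1) u] .
    moreover have "f ` F \<subseteq> B" using fA FA by blast
    then have "lub_in B leB (insert (f x) (f`F)) (f u)"
      using lub_insert[OF pB _ fA[OF xA] t(2) fu] by blast
    ultimately show ?case by auto
  qed
  fix X s assume X: "X \<subseteq> A \<and> finite X" and s: "lub_in A leA X s"
  obtain t where "lub_in A leA X t" "lub_in B leB (f`X) (f t)" using key X by blast
  then show "lub_in B leB (f ` X) (f s)" using lub_unique[OF pA s] by auto
qed



lemma fin_to_join: "fin_join_embedding A leA B leB f \<Longrightarrow> join_embedding A leA B leB f"
  unfolding fin_join_embedding_def join_embedding_def
proof (elim conjE, intro conjI ballI allI impI)
  fix x y s
  assume "\<forall>X. X \<subseteq> A \<and> finite X \<longrightarrow> (\<forall>s. lub_in A leA X s \<longrightarrow> lub_in B leB (f ` X) (f s))"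
    "x \<in> A" "y \<in> A" "lub_in A leA {x, y} s"
  note a = this
  have "{x,y} \<subseteq> A" using a(2,3) by simp
  from a(1) have "{x,y} \<subseteq> A \<and> finite {x,y} \<longrightarrow> (\<forall>s. lub_in A leA {x,y} s \<longrightarrow> lub_in B leB (f ` {x,y}) (f s))"
    by (rule spec)
  then show "lub_in B leB {f x, f y} (f s)" using a(2,3,4) by simp
qed

lemma arb_to_join: "arb_join_embedding A leA B leB f \<Longrightarrow> join_embedding A leA B leB f"
  unfolding arb_join_embedding_def join_embedding_def
proof (elim conjE, intro conjI ballI allI impI)
  fix x y s
  assume "\<forall>X. X \<subseteq> A \<longrightarrow> (\<forall>s. lub_in A leA X s \<longrightarrow> lub_in B leB (f ` X) (f s))"
    "x \<in> A" "y \<in> A" "lub_in A leA {x, y} s"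
  note a = this
  have "{x,y} \<subseteq> A" using a(2,3) by simp
  from a(1) have "{x,y} \<subseteq> A \<longrightarrow> (\<forall>s. lub_in A leA {x,y} s \<longrightarrow> lub_in B leB (f ` {x,y}) (f s))"
    by (rule spec)
  then show "lub_in B leB {f x, f y} (f s)" using a(2,3,4) by simp
qed

lemma js_join_order:
  assumes jA: "join_semilattice_bot A leA" and pB: "poset_on B leB" and f: "join_embedding A leA B leB f"
  shows "order_embedding A leA B leB f"
  by (rule join_emb_order[OF js_poset[OF jA] pB _ f]) (rule js_lub2[OF jA])

lemma part1:
  assumes jP: "join_semilattice_bot P leP" and jQ: "join_semilattice_bot Q leQ"
    and f: "join_embedding Q leQ P leP f"
  shows "\<exists>f'. fin_join_embedding Q leQ P leP f'"
proof -
  have pP: "poset_on P leP" and pQ: "poset_on Q leQ" using jP jQ js_poset by auto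
  obtain bQ where bQ: "lub_in Q leQ {} bQ" using js_bot[OF jQ] by (elim exE)
  obtain bP where bP: "lub_in P leP {} bP" using js_bot[OF jP] by (elim exE)
  have bQQ: "bQ \<in> Q" and bQle: "\<And>x. x \<in> Q \<Longrightarrow> leQ bQ x" using bQ unfolding lub_empty by auto
  have bPP: "bP \<in> P" and bPle: "\<And>x. x \<in> P \<Longrightarrow> leP bP x" using bP unfolding lub_empty by auto
  note fP = join_embD(1)[OF f] and finj = join_embD(2)[OF f] and fj = join_embD(3)[OF f]
  note fo = ord_embD(2)[OF js_join_order[OF jQ pP f]]
  have nz: "f x \<noteq> bP" if x: "x \<in> Q" "x \<noteq> bQ" for x
  proof
    assume fx: "f x = bP"
    have "leP (f bQ) (f x)" using fo[OF bQQ x(1)] bQle[OF x(1)] by simp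
    moreover have "leP bP (f bQ)" using bPle[OF fP[OF bQQ]] .
    ultimately have "f bQ = f x" using poset_antisym[OF pP fP[OF bQQ] fP[OF x(1)]] fx by simp
    then have "bQ = x" using finj bQQ x(1) unfolding inj_on_def by blast
    then show False using x(2) by simp
  qed
  define g where "g x = (if x = bQ then bP else f x)" for x
  have gP: "g x \<in> P" if "x \<in> Q" for x using fP[OF that] bPP unfolding g_def by simp
  have gj: "join_embedding Q leQ P leP g"
    unfolding join_embedding_def
  proof (intro conjI ballI allI impI)
    show "g ` Q \<subseteq> P" using gP by blast
    show "inj_on g Q" unfolding inj_on_def
    proof (intro ballI impI)
      fix x y assume x: "x \<in> Q" and y: "y \<in> Q" and e: "g x = g y"
      show "x = y"
      proof (cases "x = bQ"; cases "y = bQ")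
        assume "x \<noteq> bQ" "y \<noteq> bQ"
        then have "f x = f y" using e unfolding g_def by simp
        then show ?thesis using finj x y unfolding inj_on_def by blast
      next
        assume "x = bQ" "y \<noteq> bQ"
        then show ?thesis using e nz[OF y] unfolding g_def by simp
      next
        assume "x \<noteq> bQ" "y = bQ"
        then show ?thesis using e nz[OF x] unfolding g_def by simp
      qed simp
    qed
  next
    fix x y s assume x: "x \<in> Q" and y: "y \<in> Q" and s: "lub_in Q leQ {x, y} s"
    show "lub_in P leP {g x, g y} (g s)"
    proof (cases "x = bQ")
      case True
      have "s = y" using lub_unique[OF pQ s] lub2_le[OF pQ bQQ y bQle[OF y]] True by simp
      moreover have "g x = bP" unfolding g_def using True by simp
      ultimately show ?thesis using lub2_le[OF pP bPP gP[OF y] bPle[OF gP[OF y]]] by simp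
    next
      case xn: False
      show ?thesis
      proof (cases "y = bQ")
        case True
        have s': "lub_in Q leQ {y, x} s" using s by (simp add: insert_commute)
        have "s = x" using lub_unique[OF pQ s'] lub2_le[OF pQ bQQ x bQle[OF x]] True by simp
        moreover have "g y = bP" unfolding g_def using True by simp
        ultimately have "lub_in P leP {g y, g x} (g s)"
          using lub2_le[OF pP bPP gP[OF x] bPle[OF gP[OF x]]] by simp
        then show ?thesis by (simp add: insert_commute)
      next
        case yn: False
        have sQ: "s \<in> Q" using lub_inD(1)[OF s] .
        have "s \<noteq> bQ"
        proof
          assume "s = bQ"
          then have "leQ x bQ" using lub_inD(2)[OF s] by simp
          then have "x = bQ" using poset_antisym[OF pQ x bQQ] bQle[OF x] by simp
          then show False using xn by simp
        qed
        then show ?thesis using fj[OF x y s] xn yn unfolding g_def by simp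
      qed
    qed
  qed
  have gbot: "lub_in P leP {} (g b)" if "lub_in Q leQ {} b" for b
  proof -
    have "b = bQ" using lub_unique[OF pQ that bQ] .
    then show ?thesis using bP unfolding g_def by simp
  qed
  show ?thesis by (rule exI[of _ g], rule bin_to_fin[OF jQ jP gj], rule gbot)
qed

lemma part2:
  assumes jP: "join_semilattice_bot P leP" and jQ: "join_semilattice_bot Q leQ"
    and f0: "join_embedding Q leQ P leP f0"
  shows "\<exists>g. arb_join_embedding (ideals Q leQ) (\<subseteq>) (ideals P leP) (\<subseteq>) g"
proof -
  have pP: "poset_on P leP" and pQ: "poset_on Q leQ" using jP jQ js_poset by auto
  obtain f where ff: "fin_join_embedding Q leQ P leP f" using part1[OF jP jQ f0] by (elim exE)
  have f: "join_embedding Q leQ P leP f" using fin_to_join[OF ff] .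
  obtain bQ where bQ: "lub_in Q leQ {} bQ" using js_bot[OF jQ] by (elim exE)
  have bQQ: "bQ \<in> Q" using lub_inD(1)[OF bQ] .
  have fbQ: "lub_in P leP {} (f bQ)" using ff bQ unfolding fin_join_embedding_def
    by (metis empty_subsetI finite.emptyI image_empty)
  note fP = join_embD(1)[OF f] and fj = join_embD(3)[OF f]
  note fo = ord_embD(2)[OF js_join_order[OF jQ pP f]]
  define g where "g I = down_set P leP (f ` I)" for I
  have go: "order_embedding (ideals Q leQ) (\<subseteq>) (ideals P leP) (\<subseteq>) g"
    unfolding g_def by (rule ideal_lift[OF pQ pP js_join_order[OF jQ pP f]])
  note gI = ord_embD(1)[OF go] and gm = ord_embD(2)[OF go]
  have "arb_join_embedding (ideals Q leQ) (\<subseteq>) (ideals P leP) (\<subseteq>) g"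
    unfolding arb_join_embedding_def
  proof (intro conjI allI impI)
    show "g ` ideals Q leQ \<subseteq> ideals P leP" using gI by blast
    show "inj_on g (ideals Q leQ)" by (rule ord_emb_inj[OF poset_subset go])
  next
    fix F s assume F: "F \<subseteq> ideals Q leQ" and s: "lub_in (ideals Q leQ) (\<subseteq>) F s"
    have sI: "s \<in> ideals Q leQ" using lub_inD(1)[OF s] .
    show "lub_in (ideals P leP) (\<subseteq>) (g ` F) (g s)"
    proof (rule lub_inI)
      show "g s \<in> ideals P leP" using gI[OF sI] .
    next
      fix x assume "x \<in> g ` F"
      then obtain I where I: "I \<in> F" "x = g I" by blast
      have II: "I \<in> ideals Q leQ" using F I(1) by blast
      have "I \<subseteq> s" using lub_inD(2)[OF s I(1)] .
      then show "x \<subseteq> g s" using gm[OF II sI] I(2) by simp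
    next
      fix U assume U: "U \<in> ideals P leP" and Ub: "\<forall>x\<in>g ` F. x \<subseteq> U"
      define T where "T = {x \<in> Q. f x \<in> U}"
      have TI: "T \<in> ideals Q leQ"
      proof (rule idealI)
        show "T \<subseteq> Q" unfolding T_def by blast
        have "f bQ \<in> U" using ideal_has_bot[OF U fbQ] .
        then have "bQ \<in> T" unfolding T_def using bQQ by simp
        then show "T \<noteq> {}" by blast
      next
        fix x y assume x: "x \<in> T" and y: "y \<in> Q" and yx: "leQ y x"
        have xQ: "x \<in> Q" and fx: "f x \<in> U" using x unfolding T_def by auto
        have "leP (f y) (f x)" using fo[OF y xQ] yx by simp
        then have "f y \<in> U" using idealD(3)[OF U fx fP[OF y]] by simp
        then show "y \<in> T" unfolding T_def using y by simp
      next
        fix x y assume x: "x \<in> T" and y: "y \<in> T"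
        have xQ: "x \<in> Q" and fx: "f x \<in> U" using x unfolding T_def by auto
        have yQ: "y \<in> Q" and fy: "f y \<in> U" using y unfolding T_def by auto
        obtain z where z: "lub_in Q leQ {x,y} z" using js_lub2[OF jQ xQ yQ] by (elim exE)
        have "f z \<in> U" using ideal_closed_lub2[OF U fx fy fj[OF xQ yQ z]] .
        then have "z \<in> T" unfolding T_def using lub_inD(1)[OF z] by simp
        moreover have "leQ x z" "leQ y z" using lub_inD(2)[OF z] by auto
        ultimately show "\<exists>z\<in>T. leQ x z \<and> leQ y z" by blast
      qed
      have "I \<subseteq> T" if I: "I \<in> F" for I
      proof
        fix x assume x: "x \<in> I"
        have II: "I \<in> ideals Q leQ" using F I by blast
        have xQ: "x \<in> Q" using idealD(1)[OF II] x by blast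
        have "f x \<in> g I" unfolding g_def
          by (rule down_setI[where le=leP, OF fP[OF xQ] imageI[where f=f, OF x] poset_refl[OF pP fP[OF xQ]]])
        moreover have "g I \<subseteq> U" using Ub I by blast
        ultimately show "x \<in> T" unfolding T_def using xQ by blast
      qed
      then have sT: "s \<subseteq> T" using lub_inD(3)[OF s TI] by blast
      show "g s \<subseteq> U"
      proof
        fix p assume "p \<in> g s"
        then obtain x where px: "p \<in> P" "x \<in> s" "leP p (f x)" unfolding g_def down_set_def by blast
        have "f x \<in> U" using sT px(2) unfolding T_def by blast
        then show "p \<in> U" using idealD(3)[OF U _ px(1,3)] by simp
      qed
    qed
  qed
  then show ?thesis by (rule exI[of _ g])
qed



lemma Q_mem: "X \<in> fin_init_segs R le \<longleftrightarrow> (\<exists>A. X = down_set R le A \<and> A \<subseteq> R \<and> finite A)"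
  unfolding fin_init_segs_def by blast

lemma down_set_Un: "down_set R le (A \<union> B) = down_set R le A \<union> down_set R le B"
  unfolding down_set_def by auto

lemma down_set_empty: "down_set R le {} = {}"
  unfolding down_set_def by simp

lemma down_set_sub: "down_set R le A \<subseteq> R"
  unfolding down_set_def by auto

lemma Q_empty: "{} \<in> fin_init_segs R le"
  unfolding Q_mem by (rule exI[of _ "{}"]) (simp add: down_set_empty)

lemma Q_princ: "a \<in> R \<Longrightarrow> down_set R le {a} \<in> fin_init_segs R le"
  unfolding Q_mem by (rule exI[of _ "{a}"]) simp

lemma Q_Un: assumes "X \<in> fin_init_segs R le" "Y \<in> fin_init_segs R le"
  shows "X \<union> Y \<in> fin_init_segs R le"
proof -
  obtain A where A: "X = down_set R le A" "A \<subseteq> R" "finite A" using assms(1) unfolding Q_mem by blast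
  obtain B where B: "Y = down_set R le B" "B \<subseteq> R" "finite B" using assms(2) unfolding Q_mem by blast
  have "X \<union> Y = down_set R le (A \<union> B)" using A(1) B(1) by (simp add: down_set_Un)
  then show ?thesis unfolding Q_mem using A(2,3) B(2,3) by blast
qed

lemma Q_sub: assumes "X \<in> fin_init_segs R le" shows "X \<subseteq> R"
proof -
  obtain A where "X = down_set R le A" using assms unfolding Q_mem by blast
  then show ?thesis using down_set_sub by simp
qed

lemma Q_down: assumes p: "poset_on R le" and X: "X \<in> fin_init_segs R le" and x: "x \<in> X"
  and y: "y \<in> R" and yx: "le y x" shows "y \<in> X"
proof -
  obtain A where A: "X = down_set R le A" "A \<subseteq> R" "finite A" using X unfolding Q_mem by blast
  obtain a where a: "a \<in> A" "le x a" "x \<in> R" using x unfolding A(1) down_set_def by blast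
  have "a \<in> R" using a(1) A(2) by blast
  then have "le y a" using poset_trans[OF p y a(3) _ yx a(2)] by simp
  then show ?thesis unfolding A(1) using y a(1) unfolding down_set_def by blast
qed

lemma princ_sub: assumes p: "poset_on R le" and X: "X \<in> fin_init_segs R le" and a: "a \<in> X"
  shows "down_set R le {a} \<subseteq> X"
proof
  fix y assume "y \<in> down_set R le {a}"
  then have "y \<in> R" "le y a" unfolding down_set_def by auto
  then show "y \<in> X" using Q_down[OF p X a] by simp
qed

lemma in_princ: "poset_on R le \<Longrightarrow> a \<in> R \<Longrightarrow> a \<in> down_set R le {a}"
  unfolding down_set_def using poset_refl by fastforce

lemma Q_js: assumes p: "poset_on R le" shows "join_semilattice_bot (fin_init_segs R le) (\<subseteq>)"
  unfolding join_semilattice_bot_def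
proof (intro conjI ballI)
  show "poset_on (fin_init_segs R le) (\<subseteq>)" by (rule poset_subset)
  fix X Y assume X: "X \<in> fin_init_segs R le" and Y: "Y \<in> fin_init_segs R le"
  have "lub_in (fin_init_segs R le) (\<subseteq>) {X, Y} (X \<union> Y)"
    by (rule lub_inI) (use Q_Un[OF X Y] in auto)
  then show "\<exists>s. lub_in (fin_init_segs R le) (\<subseteq>) {X, Y} s" by (rule exI)
next
  show "\<exists>b\<in>fin_init_segs R le. \<forall>x\<in>fin_init_segs R le. b \<subseteq> x"
    using Q_empty by blast
qed

lemma Q_fin_Union: "finite X' \<Longrightarrow> X' \<subseteq> fin_init_segs R le \<Longrightarrow> \<Union>X' \<in> fin_init_segs R le"
proof (induction X' rule: finite_induct)
  case empty then show ?case using Q_empty by simp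
next
  case (insert X F)
  then have "X \<in> fin_init_segs R le" "\<Union>F \<in> fin_init_segs R le" by auto
  then show ?case using Q_Un by simp
qed

lemma Q_finite: assumes fin: "\<forall>x\<in>R. finite (down_set R le {x})" and X: "X \<in> fin_init_segs R le"
  shows "finite X"
proof -
  obtain A where A: "X = down_set R le A" "A \<subseteq> R" "finite A" using X unfolding Q_mem by blast
  have "down_set R le A = (\<Union>a\<in>A. down_set R le {a})" unfolding down_set_def by auto
  moreover have "finite (\<Union>a\<in>A. down_set R le {a})" using A(2,3) fin by auto
  ultimately show ?thesis using A(1) by simp
qed

definition IdQ :: "'r set set \<Rightarrow> 'r set \<Rightarrow> 'r set set" where
  "IdQ Q D = {X \<in> Q. X \<subseteq> D}"

lemma IdQ_ideal: "IdQ (fin_init_segs R le) D \<in> ideals (fin_init_segs R le) (\<subseteq>)"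
proof (rule idealI)
  show "IdQ (fin_init_segs R le) D \<subseteq> fin_init_segs R le" unfolding IdQ_def by blast
  have "{} \<in> IdQ (fin_init_segs R le) D" unfolding IdQ_def using Q_empty by simp
  then show "IdQ (fin_init_segs R le) D \<noteq> {}" by blast
next
  fix x y assume "x \<in> IdQ (fin_init_segs R le) D" "y \<in> fin_init_segs R le" "y \<subseteq> x"
  then show "y \<in> IdQ (fin_init_segs R le) D" unfolding IdQ_def by auto
next
  fix x y assume x: "x \<in> IdQ (fin_init_segs R le) D" and y: "y \<in> IdQ (fin_init_segs R le) D"
  have "x \<union> y \<in> IdQ (fin_init_segs R le) D" using x y Q_Un unfolding IdQ_def by auto
  then show "\<exists>z\<in>IdQ (fin_init_segs R le) D. x \<subseteq> z \<and> y \<subseteq> z" by blast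
qed

lemma union_char:
  assumes p: "poset_on R le" and I: "I \<in> ideals (fin_init_segs R le) (\<subseteq>)" and a: "a \<in> R"
  shows "a \<in> \<Union>I \<longleftrightarrow> IdQ (fin_init_segs R le) (down_set R le {a}) \<subseteq> I"
proof
  assume "a \<in> \<Union>I"
  then obtain X where X: "X \<in> I" "a \<in> X" by blast
  have XQ: "X \<in> fin_init_segs R le" using idealD(1)[OF I] X(1) by blast
  show "IdQ (fin_init_segs R le) (down_set R le {a}) \<subseteq> I"
  proof
    fix Y assume "Y \<in> IdQ (fin_init_segs R le) (down_set R le {a})"
    then have Y: "Y \<in> fin_init_segs R le" "Y \<subseteq> down_set R le {a}" unfolding IdQ_def by auto
    then have "Y \<subseteq> X" using princ_sub[OF p XQ X(2)] by blast
    then show "Y \<in> I" using idealD(3)[OF I X(1) Y(1)] by simp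
  qed
next
  assume "IdQ (fin_init_segs R le) (down_set R le {a}) \<subseteq> I"
  moreover have "down_set R le {a} \<in> IdQ (fin_init_segs R le) (down_set R le {a})"
    unfolding IdQ_def using Q_princ[OF a] by simp
  ultimately have "down_set R le {a} \<in> I" by blast
  then show "a \<in> \<Union>I" using in_princ[OF p a] by blast
qed

lemma ideal_eq_IdQ:
  assumes p: "poset_on R le" and I: "I \<in> ideals (fin_init_segs R le) (\<subseteq>)"
  shows "I = IdQ (fin_init_segs R le) (\<Union>I)"
proof
  show "I \<subseteq> IdQ (fin_init_segs R le) (\<Union>I)" unfolding IdQ_def using idealD(1)[OF I] by blast
next
  have IQ: "I \<subseteq> fin_init_segs R le" using idealD(1)[OF I] .
  have key: "finite A \<Longrightarrow> A \<subseteq> R \<Longrightarrow> A \<subseteq> \<Union>I \<Longrightarrow> down_set R le A \<in> I" for A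
  proof (induction A rule: finite_induct)
    case empty
    obtain Z where Z: "Z \<in> I" using idealD(2)[OF I] by blast
    show ?case using idealD(3)[OF I Z Q_empty] by (simp add: down_set_empty)
  next
    case (insert a A)
    then have aR: "a \<in> R" and aI: "a \<in> \<Union>I" and AI: "down_set R le A \<in> I" by auto
    have pa: "down_set R le {a} \<in> I" using union_char[OF p I aR] aI Q_princ[OF aR] in_princ[OF p aR]
      unfolding IdQ_def by blast
    obtain Z where Z: "Z \<in> I" "down_set R le {a} \<subseteq> Z" "down_set R le A \<subseteq> Z"
      using idealD(4)[OF I pa AI] by blast
    have eq: "down_set R le (insert a A) = down_set R le {a} \<union> down_set R le A"
      using down_set_Un[of R le "{a}" A] by simp
    have "down_set R le {a} \<union> down_set R le A \<in> fin_init_segs R le"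
      using Q_Un IQ pa AI by blast
    then show ?case unfolding eq using idealD(3)[OF I Z(1)] Z(2,3) by simp
  qed
  show "IdQ (fin_init_segs R le) (\<Union>I) \<subseteq> I"
  proof
    fix X assume "X \<in> IdQ (fin_init_segs R le) (\<Union>I)"
    then have X: "X \<in> fin_init_segs R le" "X \<subseteq> \<Union>I" unfolding IdQ_def by auto
    obtain A where A: "X = down_set R le A" "A \<subseteq> R" "finite A" using X(1) unfolding Q_mem by blast
    have "A \<subseteq> X" unfolding A(1) using A(2) in_princ[OF p] unfolding down_set_def by blast
    then show "X \<in> I" using key[OF A(3) A(2)] X(2) A(1) by blast
  qed
qed



lemma part3_fwd:
  assumes p: "poset_on R leR" and pP: "poset_on P leP" and jP: "join_semilattice_bot P leP"
    and phi: "order_embedding (fin_init_segs R leR) (\<subseteq>) P leP \<phi>"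
  shows "\<exists>f. fin_join_embedding (fin_init_segs R leR) (\<subseteq>) P leP f"
proof -
  let ?Q = "fin_init_segs R leR"
  let ?pr = "\<lambda>a. down_set R leR {a}"
  define G where "G a = \<phi> (?pr a)" for a
  note phP = ord_embD(1)[OF phi] and pho = ord_embD(2)[OF phi]
  have GP: "G a \<in> P" if "a \<in> R" for a unfolding G_def using phP[OF Q_princ[OF that]] .
  have ex: "\<exists>t. lub_in P leP (G ` X) t" if X: "X \<in> ?Q" for X
  proof -
    obtain A where A: "X = down_set R leR A" "A \<subseteq> R" "finite A" using X unfolding Q_mem by blast
    have GA: "G ` A \<subseteq> P" using GP A(2) by blast
    obtain t where t: "lub_in P leP (G ` A) t" using fin_lub_exists[OF jP _ GA] A(3) by blast
    have tP: "t \<in> P" using lub_inD(1)[OF t] .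
    have "lub_in P leP (G ` X) t"
    proof (rule lub_inI)
      show "t \<in> P" by fact
    next
      fix y assume "y \<in> G ` X"
      then obtain b where b: "b \<in> X" "y = G b" by blast
      obtain a where a: "a \<in> A" "leR b a" "b \<in> R" using b(1) unfolding A(1) down_set_def by blast
      have aR: "a \<in> R" using a(1) A(2) by blast
      have "?pr b \<subseteq> ?pr a"
      proof
        fix z assume "z \<in> ?pr b"
        then have z: "z \<in> R" "leR z b" unfolding down_set_def by auto
        then have "leR z a" using poset_trans[OF p z(1) a(3) aR z(2) a(2)] by simp
        then show "z \<in> ?pr a" using z(1) unfolding down_set_def by blast
      qed
      then have "leP (G b) (G a)" unfolding G_def using pho[OF Q_princ[OF a(3)] Q_princ[OF aR]] by simp
      moreover have "leP (G a) t" using lub_inD(2)[OF t] a(1) by blast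
      ultimately show "leP y t" using poset_trans[OF pP GP[OF a(3)] GP[OF aR] tP] b(2) by simp
    next
      fix u assume u: "u \<in> P" "\<forall>y\<in>G ` X. leP y u"
      have "A \<subseteq> X" unfolding A(1) using A(2) in_princ[OF p] unfolding down_set_def by blast
      then show "leP t u" using lub_inD(3)[OF t u(1)] u(2) by blast
    qed
    then show ?thesis by (rule exI)
  qed
  define f where "f X = (SOME t. lub_in P leP (G ` X) t)" for X
  have fl: "lub_in P leP (G ` X) (f X)" if "X \<in> ?Q" for X
    unfolding f_def using ex[OF that] by (rule someI_ex)
  have fP: "f X \<in> P" if "X \<in> ?Q" for X using lub_inD(1)[OF fl[OF that]] .
  have Gf: "leP (G a) (f X)" if "X \<in> ?Q" "a \<in> X" for X a using lub_inD(2)[OF fl[OF that(1)]] that(2) by blast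
  have fphi: "leP (f X) (\<phi> X)" if X: "X \<in> ?Q" for X
  proof (rule lub_inD(3)[OF fl[OF X] phP[OF X]])
    fix y assume "y \<in> G ` X"
    then obtain a where a: "a \<in> X" "y = G a" by blast
    have aR: "a \<in> R" using Q_sub[OF X] a(1) by blast
    have "?pr a \<subseteq> X" using princ_sub[OF p X a(1)] .
    then show "leP y (\<phi> X)" unfolding a(2) G_def using pho[OF Q_princ[OF aR] X] by simp
  qed
  have "fin_join_embedding ?Q (\<subseteq>) P leP f"
    unfolding fin_join_embedding_def
  proof (intro conjI allI impI)
    show "f ` ?Q \<subseteq> P" using fP by blast
    have sub: "X \<subseteq> Y" if X: "X \<in> ?Q" and Y: "Y \<in> ?Q" and e: "f X = f Y" for X Y
    proof
      fix a assume a: "a \<in> X"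
      have aR: "a \<in> R" using Q_sub[OF X] a by blast
      have "leP (G a) (f Y)" using Gf[OF X a] e by simp
      then have "leP (G a) (\<phi> Y)" using poset_trans[OF pP GP[OF aR] fP[OF Y] phP[OF Y] _ fphi[OF Y]] by simp
      then have "?pr a \<subseteq> Y" unfolding G_def using pho[OF Q_princ[OF aR] Y] by simp
      then show "a \<in> Y" using in_princ[OF p aR] by blast
    qed
    show "inj_on f ?Q" unfolding inj_on_def
    proof (intro ballI impI)
      fix X Y assume xy: "X \<in> ?Q" "Y \<in> ?Q" "f X = f Y"
      have "X \<subseteq> Y" by (rule sub[OF xy])
      moreover have "Y \<subseteq> X" by (rule sub[OF xy(2,1) xy(3)[symmetric]])
      ultimately show "X = Y" by (rule subset_antisym)
    qed
  next
    fix X' s assume X': "X' \<subseteq> ?Q \<and> finite X'" and s: "lub_in ?Q (\<subseteq>) X' s"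
    have UQ: "\<Union>X' \<in> ?Q" using Q_fin_Union X' by blast
    have "lub_in ?Q (\<subseteq>) X' (\<Union>X')" by (rule lub_inI) (use UQ in auto)
    then have sU: "s = \<Union>X'" using lub_unique[OF poset_subset s] by simp
    show "lub_in P leP (f ` X') (f s)"
    proof (rule lub_inI)
      show "f s \<in> P" using fP UQ sU by simp
    next
      fix y assume "y \<in> f ` X'"
      then obtain X where X: "X \<in> X'" "y = f X" by blast
      have XQ: "X \<in> ?Q" using X' X(1) by blast
      show "leP y (f s)" unfolding X(2)
      proof (rule lub_inD(3)[OF fl[OF XQ] fP[OF UQ, folded sU]])
        fix z assume "z \<in> G ` X"
        then obtain a where "a \<in> X" "z = G a" by blast
        then show "leP z (f s)" using Gf[OF UQ, of a] X(1) sU by blast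
      qed
    next
      fix u assume u: "u \<in> P" "\<forall>y\<in>f ` X'. leP y u"
      show "leP (f s) u"
      proof (rule lub_inD(3)[OF fl[OF UQ, folded sU] u(1)])
        fix z assume "z \<in> G ` s"
        then obtain a X where a: "X \<in> X'" "a \<in> X" "z = G a" using sU by blast
        have XQ: "X \<in> ?Q" using X' a(1) by blast
        have aR: "a \<in> R" using Q_sub[OF XQ] a(2) by blast
        have "leP (f X) u" using u(2) a(1) by blast
        then show "leP z u" using poset_trans[OF pP GP[OF aR] fP[OF XQ] u(1) Gf[OF XQ a(2)]] a(3) by simp
      qed
    qed
  qed
  then show ?thesis by (rule exI[of _ f])
qed



lemma part4_fwd:
  assumes p: "poset_on R leR" and jP: "join_semilattice_bot P leP"
    and psi: "order_embedding (ideals (fin_init_segs R leR) (\<subseteq>)) (\<subseteq>) (ideals P leP) (\<subseteq>) \<psi>"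
  shows "\<exists>g. arb_join_embedding (ideals (fin_init_segs R leR) (\<subseteq>)) (\<subseteq>) (ideals P leP) (\<subseteq>) g"
proof -
  let ?Q = "fin_init_segs R leR"
  let ?J = "ideals ?Q (\<subseteq>)"
  let ?pr = "\<lambda>a. down_set R leR {a}"
  note psJ = ord_embD(1)[OF psi] and pso = ord_embD(2)[OF psi]
  define G where "G a = \<psi> (IdQ ?Q (?pr a))" for a
  have GJ: "G a \<in> ideals P leP" for a unfolding G_def using psJ[OF IdQ_ideal] .
  define g where "g I = SupJ P leP (G ` \<Union>I)" for I
  have gl: "lub_in (ideals P leP) (\<subseteq>) (G ` \<Union>I) (g I)" for I
    unfolding g_def by (rule SupJ_lub[OF jP]) (use GJ in blast)
  have gJ: "g I \<in> ideals P leP" for I using lub_inD(1)[OF gl] .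
  have UR: "\<Union>I \<subseteq> R" if I: "I \<in> ?J" for I
    using Q_sub idealD(1)[OF I] by blast
  have Gg: "G a \<subseteq> g I" if "a \<in> \<Union>I" for a I using lub_inD(2)[OF gl] that by blast
  have gpsi: "g I \<subseteq> \<psi> I" if I: "I \<in> ?J" for I
  proof (rule lub_inD(3)[OF gl psJ[OF I]])
    fix y assume "y \<in> G ` \<Union>I"
    then obtain a where a: "a \<in> \<Union>I" "y = G a" by blast
    have aR: "a \<in> R" using UR[OF I] a(1) by blast
    have "IdQ ?Q (?pr a) \<subseteq> I" using union_char[OF p I aR] a(1) by simp
    then show "y \<subseteq> \<psi> I" unfolding a(2) G_def using pso[OF IdQ_ideal I] by simp
  qed
  have "arb_join_embedding ?J (\<subseteq>) (ideals P leP) (\<subseteq>) g"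
    unfolding arb_join_embedding_def
  proof (intro conjI allI impI)
    show "g ` ?J \<subseteq> ideals P leP" using gJ by blast
    have sub: "\<Union>I \<subseteq> \<Union>K" if I: "I \<in> ?J" and K: "K \<in> ?J" and e: "g I = g K" for I K
    proof
      fix a assume a: "a \<in> \<Union>I"
      have aR: "a \<in> R" using UR[OF I] a by blast
      have "G a \<subseteq> \<psi> K" using Gg[OF a] e gpsi[OF K] by blast
      then have "IdQ ?Q (?pr a) \<subseteq> K" unfolding G_def using pso[OF IdQ_ideal K] by simp
      then show "a \<in> \<Union>K" using union_char[OF p K aR] by simp
    qed
    show "inj_on g ?J" unfolding inj_on_def
    proof (intro ballI impI)
      fix I K assume ik: "I \<in> ?J" "K \<in> ?J" "g I = g K"
      have "\<Union>I \<subseteq> \<Union>K" by (rule sub[OF ik])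
      moreover have "\<Union>K \<subseteq> \<Union>I" by (rule sub[OF ik(2,1) ik(3)[symmetric]])
      ultimately have "\<Union>I = \<Union>K" by (rule subset_antisym)
      then show "I = K" using ideal_eq_IdQ[OF p ik(1)] ideal_eq_IdQ[OF p ik(2)] by simp
    qed
  next
    fix F s assume F: "F \<subseteq> ?J" and s: "lub_in ?J (\<subseteq>) F s"
    have sJ: "s \<in> ?J" using lub_inD(1)[OF s] .
    have Us: "\<Union>s = \<Union>(\<Union>F)"
    proof
      have "IdQ ?Q (\<Union>(\<Union>F)) \<in> ?J" by (rule IdQ_ideal)
      moreover have "I \<subseteq> IdQ ?Q (\<Union>(\<Union>F))" if "I \<in> F" for I
        unfolding IdQ_def using that F idealD(1) by blast
      ultimately have "s \<subseteq> IdQ ?Q (\<Union>(\<Union>F))" using lub_inD(3)[OF s] by blast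
      then show "\<Union>s \<subseteq> \<Union>(\<Union>F)" unfolding IdQ_def by blast
    next
      have "I \<subseteq> s" if "I \<in> F" for I using lub_inD(2)[OF s that] .
      then show "\<Union>(\<Union>F) \<subseteq> \<Union>s" by blast
    qed
    show "lub_in (ideals P leP) (\<subseteq>) (g ` F) (g s)"
    proof (rule lub_inI)
      show "g s \<in> ideals P leP" by (rule gJ)
    next
      fix x assume "x \<in> g ` F"
      then obtain I where I: "I \<in> F" "x = g I" by blast
      have "x \<subseteq> g s" unfolding I(2)
      proof (rule lub_inD(3)[OF gl gJ])
        fix y assume "y \<in> G ` \<Union>I"
        then obtain a where a: "a \<in> \<Union>I" "y = G a" by blast
        have "a \<in> \<Union>s" using Us a(1) I(1) by blast
        then show "y \<subseteq> g s" using Gg a(2) by blast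
      qed
      then show "x \<subseteq> g s" .
    next
      fix U assume U: "U \<in> ideals P leP" and Ub: "\<forall>x\<in>g ` F. x \<subseteq> U"
      show "g s \<subseteq> U"
      proof (rule lub_inD(3)[OF gl U])
        fix y assume "y \<in> G ` \<Union>s"
        then obtain a where a: "a \<in> \<Union>s" "y = G a" by blast
        then obtain I where I: "I \<in> F" "a \<in> \<Union>I" using Us by blast
        have "G a \<subseteq> g I" using Gg[OF I(2)] .
        moreover have "g I \<subseteq> U" using Ub I(1) by blast
        ultimately show "y \<subseteq> U" using a(2) by blast
      qed
    qed
  qed
  then show ?thesis by (rule exI[of _ g])
qed

lemma part5_bwd:
  assumes p: "poset_on R leR" and jP: "join_semilattice_bot P leP"
    and fin: "\<forall>x\<in>R. finite (down_set R leR {x})"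
    and psi: "order_embedding (ideals (fin_init_segs R leR) (\<subseteq>)) (\<subseteq>) (ideals P leP) (\<subseteq>) \<psi>"
  shows "\<exists>f. order_embedding (fin_init_segs R leR) (\<subseteq>) P leP f"
proof -
  let ?Q = "fin_init_segs R leR"
  let ?J = "ideals ?Q (\<subseteq>)"
  let ?pr = "\<lambda>a. down_set R leR {a}"
  define C where "C a = R - {y \<in> R. leR a y}" for a
  have pP: "poset_on P leP" using js_poset[OF jP] .
  note psJ = ord_embD(1)[OF psi] and pso = ord_embD(2)[OF psi]
  have exs: "\<exists>q. q \<in> \<psi> (IdQ ?Q (?pr a)) \<and> q \<notin> \<psi> (IdQ ?Q (C a))" if aR: "a \<in> R" for a
  proof (rule ccontr)
    assume "\<not> ?thesis"
    then have "\<psi> (IdQ ?Q (?pr a)) \<subseteq> \<psi> (IdQ ?Q (C a))" by blast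
    then have "IdQ ?Q (?pr a) \<subseteq> IdQ ?Q (C a)" using pso[OF IdQ_ideal IdQ_ideal] by simp
    moreover have "?pr a \<in> IdQ ?Q (?pr a)" unfolding IdQ_def using Q_princ[OF aR] by simp
    ultimately have "?pr a \<subseteq> C a" unfolding IdQ_def by blast
    moreover have "a \<in> ?pr a" using in_princ[OF p aR] .
    ultimately show False using poset_refl[OF p aR] aR unfolding C_def by blast
  qed
  define q where "q a = (SOME q. q \<in> \<psi> (IdQ ?Q (?pr a)) \<and> q \<notin> \<psi> (IdQ ?Q (C a)))" for a
  have q: "q a \<in> \<psi> (IdQ ?Q (?pr a))" "q a \<notin> \<psi> (IdQ ?Q (C a))" if "a \<in> R" for a
    using someI_ex[OF exs[OF that]] unfolding q_def by auto
  have qP: "q a \<in> P" if "a \<in> R" for a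
    using q(1)[OF that] idealD(1)[OF psJ[OF IdQ_ideal]] by blast
  have ex: "\<exists>t. lub_in P leP (q ` X) t" if X: "X \<in> ?Q" for X
  proof -
    have "finite X" using Q_finite[OF fin X] .
    moreover have "q ` X \<subseteq> P" using qP Q_sub[OF X] by blast
    ultimately show ?thesis using fin_lub_exists[OF jP] by blast
  qed
  define f where "f X = (SOME t. lub_in P leP (q ` X) t)" for X
  have fl: "lub_in P leP (q ` X) (f X)" if "X \<in> ?Q" for X
    unfolding f_def using ex[OF that] by (rule someI_ex)
  have fP: "f X \<in> P" if "X \<in> ?Q" for X using lub_inD(1)[OF fl[OF that]] .
  have fpsi: "f Y \<in> \<psi> (IdQ ?Q Y)" if Y: "Y \<in> ?Q" for Y
  proof (rule ideal_fin_lub[OF pP psJ[OF IdQ_ideal] _ _ fl[OF Y]])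
    show "finite (q ` Y)" using Q_finite[OF fin Y] by blast
    show "q ` Y \<subseteq> \<psi> (IdQ ?Q Y)"
    proof
      fix z assume "z \<in> q ` Y"
      then obtain b where b: "b \<in> Y" "z = q b" by blast
      have bR: "b \<in> R" using Q_sub[OF Y] b(1) by blast
      have "IdQ ?Q (?pr b) \<subseteq> IdQ ?Q Y" using princ_sub[OF p Y b(1)] unfolding IdQ_def by blast
      then have "\<psi> (IdQ ?Q (?pr b)) \<subseteq> \<psi> (IdQ ?Q Y)" using pso[OF IdQ_ideal IdQ_ideal] by simp
      then show "z \<in> \<psi> (IdQ ?Q Y)" using q(1)[OF bR] b(2) by blast
    qed
  qed
  have "order_embedding ?Q (\<subseteq>) P leP f"
    unfolding order_embedding_def
  proof (intro conjI ballI)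
    show "f ` ?Q \<subseteq> P" using fP by blast
    fix X Y assume X: "X \<in> ?Q" and Y: "Y \<in> ?Q"
    show "X \<subseteq> Y \<longleftrightarrow> leP (f X) (f Y)"
    proof
      assume XY: "X \<subseteq> Y"
      show "leP (f X) (f Y)"
      proof (rule lub_inD(3)[OF fl[OF X] fP[OF Y]])
        fix z assume "z \<in> q ` X"
        then have "z \<in> q ` Y" using XY by blast
        then show "leP z (f Y)" using lub_inD(2)[OF fl[OF Y]] by blast
      qed
    next
      assume le: "leP (f X) (f Y)"
      show "X \<subseteq> Y"
      proof
        fix a assume a: "a \<in> X"
        have aR: "a \<in> R" using Q_sub[OF X] a by blast
        show "a \<in> Y"
        proof (rule ccontr)
          assume aY: "a \<notin> Y"
          have "Y \<subseteq> C a"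
          proof
            fix y assume y: "y \<in> Y"
            have yR: "y \<in> R" using Q_sub[OF Y] y by blast
            have "\<not> leR a y" using Q_down[OF p Y y aR] aY by blast
            then show "y \<in> C a" unfolding C_def using yR by blast
          qed
          then have "IdQ ?Q Y \<subseteq> IdQ ?Q (C a)" unfolding IdQ_def by blast
          then have "\<psi> (IdQ ?Q Y) \<subseteq> \<psi> (IdQ ?Q (C a))" using pso[OF IdQ_ideal IdQ_ideal] by simp
          then have fY: "f Y \<in> \<psi> (IdQ ?Q (C a))" using fpsi[OF Y] by blast
          have "leP (q a) (f X)" using lub_inD(2)[OF fl[OF X]] a by blast
          then have "leP (q a) (f Y)" using poset_trans[OF pP qP[OF aR] fP[OF X] fP[OF Y] _ le] by simp
          then have "q a \<in> \<psi> (IdQ ?Q (C a))" using idealD(3)[OF psJ[OF IdQ_ideal] fY qP[OF aR]] by simp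
          then show False using q(2)[OF aR] by simp
        qed
      qed
    qed
  qed
  then show ?thesis by (rule exI[of _ f])
qed


theorem proposition1p3:
  fixes P :: "'p set" and leP :: "'p \<Rightarrow> 'p \<Rightarrow> bool"
    and Q :: "'q set" and leQ :: "'q \<Rightarrow> 'q \<Rightarrow> bool"
  assumes "join_semilattice_bot P leP" and "join_semilattice_bot Q leQ"
  shows
    "((\<exists>f. join_embedding Q leQ P leP f) \<longleftrightarrow> (\<exists>f. fin_join_embedding Q leQ P leP f))
     \<and> ((\<exists>f. join_embedding Q leQ P leP f) \<longrightarrow>
          (\<exists>g. arb_join_embedding (ideals Q leQ) (\<subseteq>) (ideals P leP) (\<subseteq>) g))
     \<and> (\<forall>(R :: 'r set) leR. poset_on R leR \<longrightarrow>
          (let Q' = fin_init_segs R leR in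
            ((\<exists>f. order_embedding Q' (\<subseteq>) P leP f) \<longleftrightarrow>
               (\<exists>f. fin_join_embedding Q' (\<subseteq>) P leP f))
          \<and> ((\<exists>g. order_embedding (ideals Q' (\<subseteq>)) (\<subseteq>) (ideals P leP) (\<subseteq>) g) \<longleftrightarrow>
               (\<exists>g. arb_join_embedding (ideals Q' (\<subseteq>)) (\<subseteq>) (ideals P leP) (\<subseteq>) g))
          \<and> ((\<forall>x\<in>R. finite (down_set R leR {x})) \<longrightarrow>
               ((\<exists>f. order_embedding Q' (\<subseteq>) P leP f) \<longleftrightarrow>
                (\<exists>g. order_embedding (ideals Q' (\<subseteq>)) (\<subseteq>) (ideals P leP) (\<subseteq>) g)))))"
proof -
  note jP = assms(1) and jQ = assms(2)
  have pP: "poset_on P leP" using js_poset[OF jP] .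
  have c1: "(\<exists>f. join_embedding Q leQ P leP f) \<longleftrightarrow> (\<exists>f. fin_join_embedding Q leQ P leP f)"
  proof
    assume "\<exists>f. join_embedding Q leQ P leP f"
    then obtain f where "join_embedding Q leQ P leP f" by (elim exE)
    then show "\<exists>f. fin_join_embedding Q leQ P leP f" by (rule part1[OF jP jQ])
  next
    assume "\<exists>f. fin_join_embedding Q leQ P leP f"
    then obtain f where "fin_join_embedding Q leQ P leP f" by (elim exE)
    then show "\<exists>f. join_embedding Q leQ P leP f" using fin_to_join by blast
  qed
  have c2: "(\<exists>f. join_embedding Q leQ P leP f) \<longrightarrow>
          (\<exists>g. arb_join_embedding (ideals Q leQ) (\<subseteq>) (ideals P leP) (\<subseteq>) g)"
  proof
    assume "\<exists>f. join_embedding Q leQ P leP f"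
    then obtain f where "join_embedding Q leQ P leP f" by (elim exE)
    then show "\<exists>g. arb_join_embedding (ideals Q leQ) (\<subseteq>) (ideals P leP) (\<subseteq>) g" by (rule part2[OF jP jQ])
  qed
  have c3: "(\<forall>(R :: 'r set) leR. poset_on R leR \<longrightarrow>
          (let Q' = fin_init_segs R leR in
            ((\<exists>f. order_embedding Q' (\<subseteq>) P leP f) \<longleftrightarrow>
               (\<exists>f. fin_join_embedding Q' (\<subseteq>) P leP f))
          \<and> ((\<exists>g. order_embedding (ideals Q' (\<subseteq>)) (\<subseteq>) (ideals P leP) (\<subseteq>) g) \<longleftrightarrow>
               (\<exists>g. arb_join_embedding (ideals Q' (\<subseteq>)) (\<subseteq>) (ideals P leP) (\<subseteq>) g))
          \<and> ((\<forall>x\<in>R. finite (down_set R leR {x})) \<longrightarrow>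
               ((\<exists>f. order_embedding Q' (\<subseteq>) P leP f) \<longleftrightarrow>
                (\<exists>g. order_embedding (ideals Q' (\<subseteq>)) (\<subseteq>) (ideals P leP) (\<subseteq>) g)))))"
  proof (intro allI impI)
    fix R :: "'r set" and leR assume p: "poset_on R leR"
    let ?Q = "fin_init_segs R leR"
    have jQ': "join_semilattice_bot ?Q (\<subseteq>)" by (rule Q_js[OF p])
    have a: "(\<exists>f. order_embedding ?Q (\<subseteq>) P leP f) \<longleftrightarrow> (\<exists>f. fin_join_embedding ?Q (\<subseteq>) P leP f)"
    proof
      assume "\<exists>f. order_embedding ?Q (\<subseteq>) P leP f"
      then obtain f where "order_embedding ?Q (\<subseteq>) P leP f" by (elim exE)
      then show "\<exists>f. fin_join_embedding ?Q (\<subseteq>) P leP f" by (rule part3_fwd[OF p pP jP])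
    next
      assume "\<exists>f. fin_join_embedding ?Q (\<subseteq>) P leP f"
      then obtain f where "fin_join_embedding ?Q (\<subseteq>) P leP f" by (elim exE)
      then have "order_embedding ?Q (\<subseteq>) P leP f" by (rule js_join_order[OF jQ' pP fin_to_join])
      then show "\<exists>f. order_embedding ?Q (\<subseteq>) P leP f" by (rule exI[of _ f])
    qed
    have b: "(\<exists>g. order_embedding (ideals ?Q (\<subseteq>)) (\<subseteq>) (ideals P leP) (\<subseteq>) g) \<longleftrightarrow>
               (\<exists>g. arb_join_embedding (ideals ?Q (\<subseteq>)) (\<subseteq>) (ideals P leP) (\<subseteq>) g)"
    proof
      assume "\<exists>g. order_embedding (ideals ?Q (\<subseteq>)) (\<subseteq>) (ideals P leP) (\<subseteq>) g"
      then obtain g where "order_embedding (ideals ?Q (\<subseteq>)) (\<subseteq>) (ideals P leP) (\<subseteq>) g" by (elim exE)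
      then show "\<exists>g. arb_join_embedding (ideals ?Q (\<subseteq>)) (\<subseteq>) (ideals P leP) (\<subseteq>) g"
        by (rule part4_fwd[OF p jP])
    next
      assume "\<exists>g. arb_join_embedding (ideals ?Q (\<subseteq>)) (\<subseteq>) (ideals P leP) (\<subseteq>) g"
      then obtain g where g: "arb_join_embedding (ideals ?Q (\<subseteq>)) (\<subseteq>) (ideals P leP) (\<subseteq>) g" by (elim exE)
      have l2: "\<exists>s. lub_in (ideals ?Q (\<subseteq>)) (\<subseteq>) {x, y} s"
        if "x \<in> ideals ?Q (\<subseteq>)" "y \<in> ideals ?Q (\<subseteq>)" for x y
      proof -
        have "{x,y} \<subseteq> ideals ?Q (\<subseteq>)" using that by simp
        then show ?thesis using SupJ_lub[OF jQ'] by blast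
      qed
      have "order_embedding (ideals ?Q (\<subseteq>)) (\<subseteq>) (ideals P leP) (\<subseteq>) g"
        by (rule join_emb_order[OF poset_subset poset_subset l2 arb_to_join[OF g]])
      then show "\<exists>g. order_embedding (ideals ?Q (\<subseteq>)) (\<subseteq>) (ideals P leP) (\<subseteq>) g" by (rule exI[of _ g])
    qed
    have c: "(\<forall>x\<in>R. finite (down_set R leR {x})) \<longrightarrow>
               ((\<exists>f. order_embedding ?Q (\<subseteq>) P leP f) \<longleftrightarrow>
                (\<exists>g. order_embedding (ideals ?Q (\<subseteq>)) (\<subseteq>) (ideals P leP) (\<subseteq>) g))"
    proof (intro impI iffI)
      assume "\<exists>f. order_embedding ?Q (\<subseteq>) P leP f"
      then obtain f where "order_embedding ?Q (\<subseteq>) P leP f" by (elim exE)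
      then have "order_embedding (ideals ?Q (\<subseteq>)) (\<subseteq>) (ideals P leP) (\<subseteq>) (\<lambda>I. down_set P leP (f ` I))"
        by (rule ideal_lift[OF poset_subset pP])
      then show "\<exists>g. order_embedding (ideals ?Q (\<subseteq>)) (\<subseteq>) (ideals P leP) (\<subseteq>) g" by (rule exI[of _ "\<lambda>I. down_set P leP (f ` I)"])
    next
      assume fin: "\<forall>x\<in>R. finite (down_set R leR {x})"
        and "\<exists>g. order_embedding (ideals ?Q (\<subseteq>)) (\<subseteq>) (ideals P leP) (\<subseteq>) g"
      then obtain g where "order_embedding (ideals ?Q (\<subseteq>)) (\<subseteq>) (ideals P leP) (\<subseteq>) g" by (elim exE)
      then show "\<exists>f. order_embedding ?Q (\<subseteq>) P leP f" by (rule part5_bwd[OF p jP fin])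
    qed
    show "let Q' = fin_init_segs R leR in
            ((\<exists>f. order_embedding Q' (\<subseteq>) P leP f) \<longleftrightarrow>
               (\<exists>f. fin_join_embedding Q' (\<subseteq>) P leP f))
          \<and> ((\<exists>g. order_embedding (ideals Q' (\<subseteq>)) (\<subseteq>) (ideals P leP) (\<subseteq>) g) \<longleftrightarrow>
               (\<exists>g. arb_join_embedding (ideals Q' (\<subseteq>)) (\<subseteq>) (ideals P leP) (\<subseteq>) g))
          \<and> ((\<forall>x\<in>R. finite (down_set R leR {x})) \<longrightarrow>
               ((\<exists>f. order_embedding Q' (\<subseteq>) P leP f) \<longleftrightarrow>
                (\<exists>g. order_embedding (ideals Q' (\<subseteq>)) (\<subseteq>) (ideals P leP) (\<subseteq>) g)))"
      unfolding Let_def using a b c by (intro conjI)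
  qed
  show ?thesis using c1 c2 c3 by (intro conjI)
qed

end
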